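(* Let $n\ge2$, $\omega\in\mathbb{R}^n$, $k\in\mathbb{R}_{>0}^n$ satisfy (IC1) $\sum_\mu\omega_\mu=0$, (IC2) $\omega\ne0$, (IC3) $\left|\frac{\omega_1}{k_1}\right|\le\cdots\le\left|\frac{\omega_n}{k_n}\right|$. For $\sigma\in\{-1,+1\}^n$ let $f_\sigma(R)=-R+\frac1n\sum_{\mu=1}^n\sigma_\mu\sqrt{k_\mu^2R-\omega_\mu^2}$. Let $\sigma\in\{-1,+1\}^n$ and $\mu$ be an index with $\sigma_\mu=+1$, and let $\sigma'$ be given by $\sigma'_\mu=-1$ and $\sigma'_\nu=\sigma_\nu$ for $\nu\ne\mu$. If $f_\sigma$ has no positive roots, then $f_{\sigma'}$ has no positive roots.
   Context: Square roots are nonnegative real square roots; a positive root of $f_\sigma$ is a real $R>0$ with $k_\mu^2R-\omega_\mu^2\ge0$ for all $\mu$ and $f_\sigma(R)=0$. *)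

theory Defs
  imports Complex_Main
begin

text \<open>Indices are 0..<n. Vectors are functions nat => real, relevant only below n.\<close>

definition f_sigma :: "nat \<Rightarrow> (nat \<Rightarrow> real) \<Rightarrow> (nat \<Rightarrow> real) \<Rightarrow> (nat \<Rightarrow> real) \<Rightarrow> real \<Rightarrow> real" where
  "f_sigma n \<omega> k \<sigma> R = - R + (1 / real n) * (\<Sum>\<mu><n. \<sigma> \<mu> * sqrt ((k \<mu>)\<^sup>2 * R - (\<omega> \<mu>)\<^sup>2))"

definition positive_root :: "nat \<Rightarrow> (nat \<Rightarrow> real) \<Rightarrow> (nat \<Rightarrow> real) \<Rightarrow> (nat \<Rightarrow> real) \<Rightarrow> real \<Rightarrow> bool" where
  "positive_root n \<omega> k \<sigma> R \<longleftrightarrow> R > 0 \<and> (\<forall>\<mu><n. (k \<mu>)\<^sup>2 * R - (\<omega> \<mu>)\<^sup>2 \<ge> 0) \<and> f_sigma n \<omega> k \<sigma> R = 0"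

end

theory Submission
  imports Defs
begin

theorem lemma2:
  fixes n :: nat and \<omega> k \<sigma> :: "nat \<Rightarrow> real" and \<mu> :: nat
  assumes n2: "n \<ge> 2"
    and kpos: "\<forall>i<n. k i > 0"
    and IC1: "(\<Sum>i<n. \<omega> i) = 0"
    and IC2: "\<exists>i<n. \<omega> i \<noteq> 0"
    and IC3: "\<forall>i j. i \<le> j \<and> j < n \<longrightarrow> \<bar>\<omega> i / k i\<bar> \<le> \<bar>\<omega> j / k j\<bar>"
    and sig: "\<forall>i<n. \<sigma> i = -1 \<or> \<sigma> i = 1"
    and mu: "\<mu> < n" "\<sigma> \<mu> = 1"
    and noroot: "\<not> (\<exists>R. positive_root n \<omega> k \<sigma> R)"
  shows "\<not> (\<exists>R. positive_root n \<omega> k (\<sigma>(\<mu> := -1)) R)"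
proof
  assume "\<exists>R. positive_root n \<omega> k (\<sigma>(\<mu> := -1)) R"
  then obtain R where R0: "R > 0" and dom: "\<forall>i<n. (k i)\<^sup>2 * R - (\<omega> i)\<^sup>2 \<ge> 0"
    and fz: "f_sigma n \<omega> k (\<sigma>(\<mu> := -1)) R = 0"
    unfolding positive_root_def by blast
  define g where "g x i = sqrt ((k i)\<^sup>2 * x - (\<omega> i)\<^sup>2)" for x i
  have npos: "real n > 0" using n2 by simp
  have split: "(\<Sum>i<n. (\<sigma>(\<mu> := -1)) i * g x i) = (\<Sum>i<n. \<sigma> i * g x i) - 2 * g x \<mu>" for x
  proof -
    have "(\<Sum>i<n. (\<sigma>(\<mu> := -1)) i * g x i) = (\<Sum>i<n. \<sigma> i * g x i - (if i = \<mu> then 2 * g x i else 0))"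
      by (rule sum.cong) (auto simp: mu)
    also have "\<dots> = (\<Sum>i<n. \<sigma> i * g x i) - 2 * g x \<mu>"
      by (simp add: sum_subtractf mu)
    finally show ?thesis .
  qed
  have fs: "f_sigma n \<omega> k \<sigma> x = - x + (1 / real n) * (\<Sum>i<n. \<sigma> i * g x i)" for x
    by (simp add: f_sigma_def g_def)
  have fs': "f_sigma n \<omega> k (\<sigma>(\<mu> := -1)) x = - x + (1 / real n) * (\<Sum>i<n. (\<sigma>(\<mu> := -1)) i * g x i)" for x
    by (simp add: f_sigma_def g_def)
  have domx: "(k i)\<^sup>2 * x - (\<omega> i)\<^sup>2 \<ge> 0" if "i < n" "x \<ge> R" for i x
  proof -
    have "(k i)\<^sup>2 * R \<le> (k i)\<^sup>2 * x" using that by (simp add: mult_left_mono)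
    thus ?thesis using dom that by force
  qed
  have "g R \<mu> \<ge> 0" using dom mu by (simp add: g_def)
  hence fRge: "f_sigma n \<omega> k \<sigma> R \<ge> 0"
    using fz npos unfolding fs fs' split by (simp add: field_simps)
  define K where "K = (\<Sum>i<n. k i)"
  define R' where "R' = max R (K\<^sup>2 + 1)"
  have RR': "R \<le> R'" unfolding R'_def by simp
  have R'pos: "R' > 0" using R0 RR' by simp
  have gle: "g R' i \<le> k i * sqrt R'" if "i < n" for i
  proof -
    have "g R' i \<le> sqrt ((k i)\<^sup>2 * R')" unfolding g_def by (rule real_sqrt_le_mono) simp
    also have "\<dots> = k i * sqrt R'" using kpos that by (simp add: real_sqrt_mult less_imp_le)
    finally show ?thesis .
  qed
  have "(\<Sum>i<n. \<sigma> i * g R' i) \<le> (\<Sum>i<n. k i * sqrt R')"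
  proof (rule sum_mono)
    fix i assume "i \<in> {..<n}"
    hence i: "i < n" by simp
    have g0: "g R' i \<ge> 0" using domx[OF i RR'] by (simp add: g_def)
    show "\<sigma> i * g R' i \<le> k i * sqrt R'"
      using sig i gle[OF i] g0 by auto
  qed
  also have "\<dots> = K * sqrt R'" by (simp add: K_def sum_distrib_right)
  finally have sK: "(\<Sum>i<n. \<sigma> i * g R' i) \<le> K * sqrt R'" .
  have Kle: "K < sqrt R'"
  proof -
    have "K \<le> \<bar>K\<bar>" by simp
    also have "\<bar>K\<bar> = sqrt (K\<^sup>2)" by simp
    also have "\<dots> < sqrt (K\<^sup>2 + 1)" by (rule real_sqrt_less_mono) simp
    also have "\<dots> \<le> sqrt R'" unfolding R'_def by simp
    finally show ?thesis .
  qed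
  have sR: "sqrt R' * sqrt R' = R'" using R'pos by simp
  have "K * sqrt R' < R'"
    using Kle R'pos sR by (metis mult_strict_right_mono real_sqrt_gt_zero)
  hence "(\<Sum>i<n. \<sigma> i * g R' i) < R'" using sK by linarith
  hence "(1 / real n) * (\<Sum>i<n. \<sigma> i * g R' i) < R'"
  proof -
    assume a: "(\<Sum>i<n. \<sigma> i * g R' i) < R'"
    have "real n \<ge> 1" using n2 by simp
    hence "R' \<le> real n * R'" using R'pos by simp
    thus ?thesis using a npos by (simp add: field_simps)
  qed
  hence fR'neg: "f_sigma n \<omega> k \<sigma> R' \<le> 0" unfolding fs by simp
  have cont: "continuous_on {R..R'} (f_sigma n \<omega> k \<sigma>)"
    unfolding f_sigma_def by (intro continuous_intros)
  obtain x where x: "x \<ge> R" "x \<le> R'" "f_sigma n \<omega> k \<sigma> x = 0"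
    using IVT2'[of "f_sigma n \<omega> k \<sigma>" R' 0 R, OF fR'neg fRge RR' cont] by blast
  have "positive_root n \<omega> k \<sigma> x"
    unfolding positive_root_def
  proof (intro conjI allI impI)
    show "x > 0" using x R0 by simp
    show "f_sigma n \<omega> k \<sigma> x = 0" by (rule x(3))
    fix i assume i: "i < n"
    have "(k i)\<^sup>2 * R \<le> (k i)\<^sup>2 * x" using x by (simp add: mult_left_mono)
    thus "(k i)\<^sup>2 * x - (\<omega> i)\<^sup>2 \<ge> 0" using dom i by force
  qed
  thus False using noroot by blast
qed

end
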